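(* Let $(X,Y)$ and $(X',Y')$ be i.i.d. copies, with $X$ taking values in some feature space and $Y$ real-valued with continuous distribution function $F_Y$ and $\mathbb{E}|Y|<\infty$. Let $g$ be a real-valued score function such that $g(X)$ has a continuous distribution function $F_{g(X)}$ (so $\mathbb{P}(g(X)=g(X'))=0$). For a nonnegative symmetric weight function $w$, define \[ \mathcal{L}(g)=\mathbb{E}\!\left[w(Y,Y')\,\mathbbm{1}\!\left\{(Y-Y')\,\operatorname{sign}\big(g(X)-g(X')\big)\le 0\right\}\right]. \] Then: 1. (Kendall's $\tau$.) If $w\equiv 1$, then $\mathcal{L}(g)=\mathcal{L}_{\mathrm{uni}}(Y,g(X))=\tfrac12\big(1-\tau(Y,g(X))\big)$, where $\tau(Y,g(X))=\mathbb{E}[\operatorname{sign}(Y-Y')\operatorname{sign}(g(X)-g(X'))]$; hence minimizing $\mathcal{L}$ over $g$ is equivalent to minimizing $\mathcal{L}_{\mathrm{uni}}$. 2. (Gini covariance.) If $w(Y,Y')=|Y-Y'|$, then $\mathcal{L}(g)=\mathcal{L}_{\mathrm{abs}}(Y,g(X))=c-2\operatorname{Cov}\big(Y,F_{g(X)}(g(X))\big)$ with $c=\tfrac12\mathbb{E}|Y-Y'|$, a constant not depending on $g$; hence minimizing $\mathcal{L}$ over $g$ is equivalent to minimizing $\mathcal{L}_{\mathrm{abs}}$. 3. (Spearman's $\rho$.) If $w(Y,Y')=|F_Y(Y)-F_Y(Y')|$, then $\mathcal{L}(g)=\mathcal{L}_{\mathrm{cdf}}(Y,g(X))=\tfrac16\big(1-\rho_S(Y,g(X))\big)$,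 where $\rho_S(Y,g(X))=12\operatorname{Cov}\big(F_Y(Y),F_{g(X)}(g(X))\big)$; hence minimizing $\mathcal{L}$ over $g$ is equivalent to minimizing $\mathcal{L}_{\mathrm{cdf}}$.
   Context: $\operatorname{sign}(t)=\mathbbm{1}\{t>0\}-\mathbbm{1}\{t<0\}$. $F_{g(X)}$ denotes the cumulative distribution function of the random variable $g(X)$, and $F_Y$ that of $Y$. *)

theory Defs
  imports "HOL-Probability.Probability"
begin

text \<open>The joint law of (X,Y) is a probability measure P on S \<Otimes> borel (S the feature space).
  An i.i.d. copy (X',Y') is modelled by the product measure P \<Otimes> P; a point of the product
  is ((x,y),(x',y')).\<close>

definition cdf_of :: "'s measure \<Rightarrow> ('s \<Rightarrow> real) \<Rightarrow> real \<Rightarrow> real" where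
  "cdf_of P h t = measure P {z \<in> space P. h z \<le> t}"

definition cov_of :: "'s measure \<Rightarrow> ('s \<Rightarrow> real) \<Rightarrow> ('s \<Rightarrow> real) \<Rightarrow> real" where
  "cov_of P f h = (\<integral>z. f z * h z \<partial>P) - (\<integral>z. f z \<partial>P) * (\<integral>z. h z \<partial>P)"

definition rank_loss :: "('x \<times> real) measure \<Rightarrow> (real \<Rightarrow> real \<Rightarrow> real) \<Rightarrow> ('x \<Rightarrow> real) \<Rightarrow> real" where
  "rank_loss P w g =
     (\<integral>p. w (snd (fst p)) (snd (snd p)) *
         indicator {p. (snd (fst p) - snd (snd p)) * sgn (g (fst (fst p)) - g (fst (snd p))) \<le> 0} p
       \<partial>(P \<Otimes>\<^sub>M P))"

definition kendall_tau :: "('x \<times> real) measure \<Rightarrow> ('x \<Rightarrow> real) \<Rightarrow> real" where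
  "kendall_tau P g =
     (\<integral>p. sgn (snd (fst p) - snd (snd p)) * sgn (g (fst (fst p)) - g (fst (snd p))) \<partial>(P \<Otimes>\<^sub>M P))"

definition spearman_rho :: "('x \<times> real) measure \<Rightarrow> ('x \<Rightarrow> real) \<Rightarrow> real" where
  "spearman_rho P g =
     12 * cov_of P (\<lambda>z. cdf_of P snd (snd z)) (\<lambda>z. cdf_of P (\<lambda>u. g (fst u)) (g (fst z)))"

end

theory Submission
  imports Defs
begin

lemma cdf_of_distr:
  assumes P: "prob_space P" and h[measurable]: "h \<in> borel_measurable P"
  shows "cdf (distr P borel h) x = cdf_of P h x"
  unfolding cdf_def cdf_of_def
  by (subst measure_distr) (auto intro!: arg_cong[where f="measure P"])

lemma cdf_of_null:
  assumes P: "prob_space P" and h[measurable]: "h \<in> borel_measurable P"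
    and c: "continuous_on UNIV (cdf_of P h)"
  shows "measure P {z\<in>space P. h z = t} = 0"
proof -
  interpret prob_space P by fact
  interpret D: real_distribution "distr P borel h" by simp
  have e: "cdf (distr P borel h) = cdf_of P h" using cdf_of_distr[OF P h] by auto
  have "isCont (cdf (distr P borel h)) t"
    using c unfolding e by (simp add: continuous_on_eq_continuous_at)
  then have "measure (distr P borel h) {t} = 0" using D.isCont_cdf by blast
  then show ?thesis by (subst (asm) measure_distr) (auto simp: vimage_def Int_def conj_commute)
qed

lemma cdf_of_mono:
  assumes P: "prob_space P" and h[measurable]: "h \<in> borel_measurable P"
  shows "x \<le> y \<Longrightarrow> cdf_of P h x \<le> cdf_of P h y"
proof -
  interpret prob_space P by fact
  interpret D: real_distribution "distr P borel h" by simp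
  show "x \<le> y \<Longrightarrow> cdf_of P h x \<le> cdf_of P h y"
    using D.cdf_nondecreasing by (simp add: cdf_of_distr[OF P h, symmetric])
qed

lemma cdf_of_bounds:
  assumes P: "prob_space P" and h[measurable]: "h \<in> borel_measurable P"
  shows "0 \<le> cdf_of P h x" "cdf_of P h x \<le> 1"
    "(cdf_of P h \<longlongrightarrow> 1) at_top" "(cdf_of P h \<longlongrightarrow> 0) at_bot"
proof -
  interpret prob_space P by fact
  interpret D: real_distribution "distr P borel h" by simp
  have e: "cdf_of P h = cdf (distr P borel h)" using cdf_of_distr[OF P h] by auto
  show "0 \<le> cdf_of P h x" "cdf_of P h x \<le> 1"
    "(cdf_of P h \<longlongrightarrow> 1) at_top" "(cdf_of P h \<longlongrightarrow> 0) at_bot"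
    unfolding e using D.cdf_nonneg D.cdf_bounded_prob D.cdf_lim_at_top_prob D.cdf_lim_at_bot by auto
qed

lemma cdf_of_uniform:
  assumes P: "prob_space P" and h[measurable]: "h \<in> borel_measurable P"
    and c: "continuous_on UNIV (cdf_of P h)"
  shows "distributed P lborel (\<lambda>z. cdf_of P h (h z)) (\<lambda>x. indicator {0..1} x / measure lborel {0..1::real})"
proof -
  interpret prob_space P by fact
  define F where "F = cdf_of P h"
  have Fc: "continuous_on UNIV F" using c by (simp add: F_def)
  have Fm[measurable]: "F \<in> borel_measurable borel"
    using Fc by (simp add: borel_measurable_continuous_onI)
  have mono: "\<And>x y. x \<le> y \<Longrightarrow> F x \<le> F y" unfolding F_def using cdf_of_mono[OF P h] by blast
  note bnd = cdf_of_bounds[OF P h, folded F_def]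
  show ?thesis
  proof (rule uniform_distrI_borel_atLeastAtMost)
    show "(\<lambda>z. cdf_of P h (h z)) \<in> borel_measurable P" by (fold F_def) measurable
    show "(0::real) < 1" by simp
    fix t :: real assume t0: "0 \<le> t" and t1: "t \<le> 1"
    show "prob {x \<in> space P. cdf_of P h (h x) \<le> t} = (t - 0) / (1 - 0)"
    proof (cases "t = 1")
      case True
      then have "{x \<in> space P. cdf_of P h (h x) \<le> t} = space P" using bnd(2) by (auto simp: F_def)
      then show ?thesis using True by (simp add: prob_space)
    next
      case False
      then have tl: "t < 1" using t1 by simp
      define S where "S = {x. F x \<le> t}"
      have "eventually (\<lambda>x. F x > t) at_top" using bnd(3) tl by (intro order_tendstoD(1))
      then obtain N where N: "\<And>x. x \<ge> N \<Longrightarrow> F x > t" by (auto simp: eventually_at_top_linorder)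
      have bdd: "bdd_above S"
        unfolding S_def bdd_above_def by (metis (mono_tags) linorder_not_less mem_Collect_eq nle_le N)
      have clS: "closed S" unfolding S_def using Fc by (intro closed_Collect_le) (auto intro: continuous_intros)
      show ?thesis
      proof (cases "S = {}")
        case True
        have "t = 0"
        proof (rule ccontr)
          assume "t \<noteq> 0" then have "t > 0" using t0 by simp
          then have "eventually (\<lambda>x. F x < t) at_bot" using bnd(4) by (intro order_tendstoD(2))
          then obtain M where "\<And>x. x \<le> M \<Longrightarrow> F x < t" by (auto simp: eventually_at_bot_linorder)
          then have "M \<in> S" by (auto simp: S_def less_imp_le)
          then show False using True by simp
        qed
        moreover have e: "{x \<in> space P. cdf_of P h (h x) \<le> t} = {}" using True by (auto simp: S_def F_def)
        ultimately show ?thesis by (simp only: e measure_empty) simp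
      next
        case False
        define s where "s = Sup S"
        have "s \<in> S" unfolding s_def using closed_contains_Sup[OF False bdd clS] .
        then have Fs1: "F s \<le> t" by (simp add: S_def)
        have Fs2: "F s \<ge> t"
        proof (rule ccontr)
          assume "\<not> F s \<ge> t" then have "F s < t" by simp
          moreover have "(F \<longlongrightarrow> F s) (at s)" using Fc by (simp add: continuous_on_eq_continuous_at isCont_def)
          ultimately have "eventually (\<lambda>x. F x < t) (at s)" by (intro order_tendstoD)
          then obtain d where d: "d > 0" "\<And>x. x \<noteq> s \<Longrightarrow> dist x s < d \<Longrightarrow> F x < t"
            by (auto simp: eventually_at)
          have "F (s + d/2) < t" using d by (intro d(2)) (auto simp: dist_real_def)
          then have "s + d/2 \<in> S" by (simp add: S_def)
          then have "s + d/2 \<le> s" unfolding s_def using bdd by (rule cSup_upper)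
          then show False using d by simp
        qed
        have "{x \<in> space P. cdf_of P h (h x) \<le> t} = {x \<in> space P. h x \<le> s}"
        proof safe
          fix x assume "x \<in> space P" "cdf_of P h (h x) \<le> t"
          then have "h x \<in> S" by (simp add: S_def F_def)
          then show "h x \<le> s" unfolding s_def using bdd by (rule cSup_upper)
        next
          fix x assume "x \<in> space P" "h x \<le> s"
          then show "cdf_of P h (h x) \<le> t" using mono[of "h x" s] Fs1 by (simp add: F_def)
        qed
        then have "prob {x \<in> space P. cdf_of P h (h x) \<le> t} = F s" by (simp add: F_def cdf_of_def)
        then show ?thesis using Fs1 Fs2 by simp
      qed
    qed
  qed
qed

lemma cdf_of_moments:
  assumes P: "prob_space P" and h[measurable]: "h \<in> borel_measurable P"
    and c: "continuous_on UNIV (cdf_of P h)"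
  shows "(\<integral>z. cdf_of P h (h z) \<partial>P) = 1/2" "(\<integral>z. (cdf_of P h (h z))^2 \<partial>P) = 1/3"
proof -
  interpret prob_space P by fact
  have D: "distributed P lborel (\<lambda>z. cdf_of P h (h z)) (\<lambda>x. indicator {0..1} x / measure lborel {0..1::real})"
    by (rule cdf_of_uniform[OF P h c])
  have Fm[measurable]: "cdf_of P h \<in> borel_measurable borel"
    using c by (simp add: borel_measurable_continuous_onI)
  note bnd = cdf_of_bounds[OF P h]
  have i1: "integrable P (\<lambda>z. cdf_of P h (h z))"
    by (rule integrable_const_bound[where B=1]) (use bnd in auto)
  have i2: "integrable P (\<lambda>z. (cdf_of P h (h z))^2)"
    by (rule integrable_const_bound[where B=1]) (use bnd in \<open>auto simp: abs_le_iff power_le_one\<close>)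
  have e: "expectation (\<lambda>z. cdf_of P h (h z)) = 1/2"
    using uniform_distributed_expectation[OF D] by simp
  have v: "variance (\<lambda>z. cdf_of P h (h z)) = 1/12"
    using uniform_distributed_variance[OF D] by simp
  show "(\<integral>z. cdf_of P h (h z) \<partial>P) = 1/2" using e .
  show "(\<integral>z. (cdf_of P h (h z))^2 \<partial>P) = 1/3"
  proof -
    have "expectation (\<lambda>z. (cdf_of P h (h z))^2) - (1/2)^2 = 1/12"
      using v variance_eq[OF i1 i2] e by simp
    then show ?thesis by (simp add: power2_eq_square)
  qed
qed

lemma cdf_of_AE:
  assumes P: "prob_space P" and h[measurable]: "h \<in> borel_measurable P"
    and c: "continuous_on UNIV (cdf_of P h)"
  shows "AE z in P. h z \<noteq> t"
proof -
  interpret prob_space P by fact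
  have "emeasure P {z\<in>space P. h z = t} = 0"
    using cdf_of_null[OF P h c, of t] by (simp add: emeasure_eq_measure)
  then show ?thesis by (subst AE_iff_measurable[OF _ refl]) auto
qed

lemma cdf_of_sgn:
  assumes P: "prob_space P" and h[measurable]: "h \<in> borel_measurable P"
    and c: "continuous_on UNIV (cdf_of P h)"
  shows "(\<integral>z. sgn (t - h z) \<partial>P) = 2 * cdf_of P h t - 1"
proof -
  interpret prob_space P by fact
  have ae: "AE z in P. sgn (t - h z) = 2 * indicator {z\<in>space P. h z \<le> t} z - 1"
    using cdf_of_AE[OF P h c, of t] AE_space by eventually_elim (auto simp: indicator_def sgn_if)
  have "(\<integral>z. sgn (t - h z) \<partial>P) = (\<integral>z. 2 * indicator {z\<in>space P. h z \<le> t} z - 1 \<partial>P)"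
    by (rule integral_cong_AE) (use ae in auto)
  also have "\<dots> = (\<integral>z. 2 * indicator {z\<in>space P. h z \<le> t} z \<partial>P) - (\<integral>z. 1 \<partial>P)"
    by (rule Bochner_Integration.integral_diff) (auto intro!: integrable_const_bound[where B=2] simp: indicator_def)
  also have "\<dots> = 2 * measure P {z\<in>space P. h z \<le> t} - 1"
    by (simp add: prob_space)
  finally show ?thesis by (simp add: cdf_of_def)
qed

lemma cdf_of_AE_pair:
  assumes P: "prob_space P" and h[measurable]: "h \<in> borel_measurable P"
    and c: "continuous_on UNIV (cdf_of P h)"
  shows "AE p in P \<Otimes>\<^sub>M P. h (fst p) \<noteq> h (snd p)"
proof -
  interpret pair_prob_space P P
    unfolding pair_prob_space_def pair_sigma_finite_def using P by (auto intro: prob_space_imp_sigma_finite)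
  show ?thesis
  proof (rule AE_pair_measure)
    show "{x \<in> space (P \<Otimes>\<^sub>M P). h (fst x) \<noteq> h (snd x)} \<in> sets (P \<Otimes>\<^sub>M P)" by measurable
    have "AE y in P. h x \<noteq> h y" for x
      using cdf_of_AE[OF P h c, of "h x"] by (rule eventually_mono) auto
    then show "AE x in P. AE y in P. h (fst (x, y)) \<noteq> h (snd (x, y))" by simp
  qed
qed

lemma pt_ind:
  fixes d s :: real
  assumes "s = 1 \<or> s = -1"
  shows "\<bar>d\<bar> * indicator {p. d * s \<le> 0} q = \<bar>d\<bar>/2 - d * s / 2"
  using assms by (cases "d \<ge> 0") (auto simp: indicator_def)

lemma pair_integrable_fst:
  fixes a :: "'a \<Rightarrow> real"
  assumes P: "prob_space P" and [measurable]: "a \<in> borel_measurable P" and ia: "integrable P a"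
  shows "integrable (P \<Otimes>\<^sub>M P) (\<lambda>p. a (fst p))" "integrable (P \<Otimes>\<^sub>M P) (\<lambda>p. a (snd p))"
proof -
  interpret pair_prob_space P P
    unfolding pair_prob_space_def pair_sigma_finite_def using P by (auto intro: prob_space_imp_sigma_finite)
  show "integrable (P \<Otimes>\<^sub>M P) (\<lambda>p. a (fst p))"
  proof (rule Fubini_integrable[of "\<lambda>p. a (fst p)"])
    show "(\<lambda>p. a (fst p)) \<in> borel_measurable (P \<Otimes>\<^sub>M P)" by measurable
    show "integrable P (\<lambda>x. \<integral>y. norm (a (fst (x, y))) \<partial>P)" using ia by (simp add: prob_space integrable_norm)
    show "AE x in P. integrable P (\<lambda>y. a (fst (x, y)))" by simp
  qed
  show "integrable (P \<Otimes>\<^sub>M P) (\<lambda>p. a (snd p))"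
  proof (rule Fubini_integrable[of "\<lambda>p. a (snd p)"])
    show "(\<lambda>p. a (snd p)) \<in> borel_measurable (P \<Otimes>\<^sub>M P)" by measurable
    show "integrable P (\<lambda>x. \<integral>y. norm (a (snd (x, y))) \<partial>P)" by simp
    show "AE x in P. integrable P (\<lambda>y. a (snd (x, y)))" using ia by simp
  qed
qed

lemma gini_gen:
  assumes P: "prob_space P" and h[measurable]: "h \<in> borel_measurable P"
    and c: "continuous_on UNIV (cdf_of P h)"
    and a[measurable]: "a \<in> borel_measurable P" and ia: "integrable P a"
  shows "(\<integral>p. \<bar>a (fst p) - a (snd p)\<bar> * indicator {p. (a (fst p) - a (snd p)) * sgn (h (fst p) - h (snd p)) \<le> 0} p \<partial>(P \<Otimes>\<^sub>M P))
    = (\<integral>p. \<bar>a (fst p) - a (snd p)\<bar> \<partial>(P \<Otimes>\<^sub>M P)) / 2 - 2 * cov_of P a (\<lambda>z. cdf_of P h (h z))"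
proof -
  interpret pair_prob_space P P
    unfolding pair_prob_space_def pair_sigma_finite_def using P by (auto intro: prob_space_imp_sigma_finite)
  let ?Q = "P \<Otimes>\<^sub>M P"
  define F where "F = cdf_of P h"
  have Fm[measurable]: "F \<in> borel_measurable borel"
    using c by (simp add: borel_measurable_continuous_onI F_def)
  note bnd = cdf_of_bounds[OF P h, folded F_def]
  define d where "d p = a (fst p) - a (snd p)" for p
  define s where "s p = sgn (h (fst p) - h (snd p))" for p
  have [measurable]: "d \<in> borel_measurable ?Q" "s \<in> borel_measurable ?Q" unfolding d_def s_def by measurable
  note i1 = pair_integrable_fst[OF P a ia]
  have id: "integrable ?Q d" unfolding d_def using i1 by auto
  have iad: "integrable ?Q (\<lambda>p. \<bar>d p\<bar>)" using id by auto
  have ids: "integrable ?Q (\<lambda>p. d p * s p)"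
    by (rule Bochner_Integration.integrable_bound[OF iad]) (auto simp: s_def sgn_if abs_mult)
  have ias: "integrable ?Q (\<lambda>p. a (fst p) * s p)"
    by (rule Bochner_Integration.integrable_bound[OF i1(1)]) (auto simp: s_def sgn_if abs_mult)
  have ias2: "integrable ?Q (\<lambda>p. a (snd p) * s p)"
    by (rule Bochner_Integration.integrable_bound[OF i1(2)]) (auto simp: s_def sgn_if abs_mult)
  have ae: "AE p in ?Q. \<bar>d p\<bar> * indicator {p. d p * s p \<le> 0} p = \<bar>d p\<bar>/2 - d p * s p / 2"
    using cdf_of_AE_pair[OF P h c]
  proof eventually_elim
    case (elim p)
    then have "s p = 1 \<or> s p = -1" by (auto simp: s_def sgn_if)
    then show ?case by (cases "d p \<ge> 0") (auto simp: indicator_def)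
  qed
  have "(\<integral>p. \<bar>d p\<bar> * indicator {p. d p * s p \<le> 0} p \<partial>?Q) = (\<integral>p. \<bar>d p\<bar>/2 - d p * s p / 2 \<partial>?Q)"
    by (rule integral_cong_AE) (use ae in auto)
  also have "\<dots> = (\<integral>p. \<bar>d p\<bar> \<partial>?Q)/2 - (\<integral>p. d p * s p \<partial>?Q) / 2"
    using iad ids by simp
  finally have s1: "(\<integral>p. \<bar>d p\<bar> * indicator {p. d p * s p \<le> 0} p \<partial>?Q) = (\<integral>p. \<bar>d p\<bar> \<partial>?Q)/2 - (\<integral>p. d p * s p \<partial>?Q) / 2" .
  have "(\<integral>p. d p * s p \<partial>?Q) = (\<integral>p. a (fst p) * s p \<partial>?Q) - (\<integral>p. a (snd p) * s p \<partial>?Q)"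
    using ias ias2 by (simp add: d_def left_diff_distrib)
  moreover have "(\<integral>p. a (snd p) * s p \<partial>?Q) = - (\<integral>p. a (fst p) * s p \<partial>?Q)"
  proof -
    have "(\<integral>(x,y). (\<lambda>p. - (a (fst p) * s p)) (y,x) \<partial>?Q) = (\<integral>p. - (a (fst p) * s p) \<partial>?Q)"
      by (rule integral_product_swap) measurable
    moreover have "(\<lambda>(x,y). (\<lambda>p. - (a (fst p) * s p)) (y,x)) = (\<lambda>p. a (snd p) * s p)"
      by (auto simp: s_def sgn_if fun_eq_iff)
    ultimately show ?thesis by simp
  qed
  moreover have "(\<integral>p. a (fst p) * s p \<partial>?Q) = 2 * (\<integral>z. a z * F (h z) \<partial>P) - (\<integral>z. a z \<partial>P)"
  proof -
    have "(\<integral>p. a (fst p) * s p \<partial>?Q) = (\<integral>x. (\<integral>y. a (fst (x,y)) * s (x,y) \<partial>P) \<partial>P)"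
      using integral_fst'[OF ias] by simp
    also have "\<dots> = (\<integral>x. a x * (2 * F (h x) - 1) \<partial>P)"
      by (rule Bochner_Integration.integral_cong) (auto simp: s_def F_def cdf_of_sgn[OF P h c])
    also have "\<dots> = (\<integral>x. 2 * (a x * F (h x)) - a x \<partial>P)"
      by (simp add: algebra_simps)
    also have "\<dots> = 2 * (\<integral>z. a z * F (h z) \<partial>P) - (\<integral>z. a z \<partial>P)"
    proof -
      have "integrable P (\<lambda>x. a x * F (h x))"
        by (rule Bochner_Integration.integrable_bound[OF ia]) (auto simp: abs_mult intro!: mult_left_le simp: abs_le_iff bnd)
      then show ?thesis using ia by simp
    qed
    finally show ?thesis .
  qed
  ultimately have X: "(\<integral>p. d p * s p \<partial>?Q) = 2 * (2 * (\<integral>z. a z * F (h z) \<partial>P) - (\<integral>z. a z \<partial>P))" by simp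
  have E: "(\<integral>z. F (h z) \<partial>P) = 1/2" using cdf_of_moments(1)[OF P h c] by (simp add: F_def)
  have C: "cov_of P a (\<lambda>z. cdf_of P h (h z)) = (\<integral>z. a z * F (h z) \<partial>P) - (\<integral>z. a z \<partial>P) / 2"
    unfolding cov_of_def F_def[symmetric] E by simp
  show ?thesis unfolding d_def[symmetric] s_def[symmetric] C using s1 X by (simp add: field_simps)
qed

lemma pt_kendall:
  fixes y y' u u' :: real
  assumes "y \<noteq> y'" "u \<noteq> u'"
  shows "(if (y - y') * sgn (u - u') \<le> 0 then 1 else 0) = (1 - sgn (y - y') * sgn (u - u')) / (2::real)"
proof (cases "y < y'")
  case True
  then show ?thesis using assms by (cases "u < u'") (simp_all add: sgn_if)
next
  case False
  then show ?thesis using assms by (cases "u < u'") (simp_all add: sgn_if)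
qed

lemma mono_sign_ind:
  fixes F :: "real \<Rightarrow> real"
  assumes mono: "\<And>x y. x \<le> y \<Longrightarrow> F x \<le> F y"
  shows "\<bar>F y - F y'\<bar> * (if (y - y') * s \<le> 0 then 1 else 0) = \<bar>F y - F y'\<bar> * (if (F y - F y') * s \<le> 0 then 1 else (0::real))"
proof -
  consider "F y = F y'" | "F y > F y'" | "F y < F y'" by linarith
  then show ?thesis
  proof cases
    case 2
    then have "y > y'" using mono[of y y'] by (cases "y \<le> y'") auto
    then show ?thesis using 2 by (auto simp: mult_le_0_iff)
  next
    case 3
    then have "y < y'" using mono[of y' y] by (cases "y' \<le> y") auto
    then show ?thesis using 3 by (auto simp: mult_le_0_iff)
  qed simp
qed

theorem theorem1:
  fixes S :: "'x measure" and P :: "('x \<times> real) measure" and g :: "'x \<Rightarrow> real"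
  assumes "prob_space P"
    and "sets P = sets (S \<Otimes>\<^sub>M borel)"
    and "integrable P snd"
    and "continuous_on UNIV (cdf_of P snd)"
    and "g \<in> borel_measurable S"
    and "continuous_on UNIV (cdf_of P (\<lambda>z. g (fst z)))"
  shows "rank_loss P (\<lambda>y y'. 1) g = (1 - kendall_tau P g) / 2
    \<and> rank_loss P (\<lambda>y y'. \<bar>y - y'\<bar>) g =
           (\<integral>p. \<bar>snd (fst p) - snd (snd p)\<bar> \<partial>(P \<Otimes>\<^sub>M P)) / 2
           - 2 * cov_of P snd (\<lambda>z. cdf_of P (\<lambda>u. g (fst u)) (g (fst z)))
    \<and> rank_loss P (\<lambda>y y'. \<bar>cdf_of P snd y - cdf_of P snd y'\<bar>) g = (1 - spearman_rho P g) / 6"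
proof -
  note P = assms(1)
  interpret pair_prob_space P P
    unfolding pair_prob_space_def pair_sigma_finite_def using P by (auto intro: prob_space_imp_sigma_finite)
  let ?Q = "P \<Otimes>\<^sub>M P"
  have ms: "measurable P = measurable (S \<Otimes>\<^sub>M borel)"
    by (rule ext, rule measurable_cong_sets[OF assms(2) refl])
  have Ym[measurable]: "snd \<in> borel_measurable P" unfolding ms by simp
  have gm[measurable]: "g \<in> borel_measurable S" by fact
  have Gm[measurable]: "(\<lambda>z. g (fst z)) \<in> borel_measurable P" unfolding ms by measurable
  define FY where "FY = cdf_of P snd"
  have FYm[measurable]: "FY \<in> borel_measurable borel"
    using assms(4) by (simp add: borel_measurable_continuous_onI FY_def)
  have FYmono: "\<And>x y. x \<le> y \<Longrightarrow> FY x \<le> FY y" unfolding FY_def using cdf_of_mono[OF P Ym] by blast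
  note FYb = cdf_of_bounds[OF P Ym, folded FY_def]
  have Um[measurable]: "(\<lambda>z. FY (snd z)) \<in> borel_measurable P" by measurable
  have iU: "integrable P (\<lambda>z. FY (snd z))"
    by (rule M1.integrable_const_bound[where B=1]) (use FYb in auto)
  note aeY = cdf_of_AE_pair[OF P Ym assms(4)]
  note aeG = cdf_of_AE_pair[OF P Gm assms(6)]
  have p1: "rank_loss P (\<lambda>y y'. 1) g = (1 - kendall_tau P g) / 2"
  proof -
    have ae: "AE p in ?Q. 1 * indicator {p. (snd (fst p) - snd (snd p)) * sgn (g (fst (fst p)) - g (fst (snd p))) \<le> 0} p
       = (1 - sgn (snd (fst p) - snd (snd p)) * sgn (g (fst (fst p)) - g (fst (snd p)))) / 2"
      using aeY aeG
    proof eventually_elim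
      case (elim p)
      then show ?case
        unfolding indicator_def of_bool_def mem_Collect_eq mult_1
        by (intro pt_kendall) auto
    qed
    have it: "integrable ?Q (\<lambda>p. sgn (snd (fst p) - snd (snd p)) * sgn (g (fst (fst p)) - g (fst (snd p))))"
      by (rule integrable_const_bound[where B=1]) (auto simp: sgn_if)
    have "rank_loss P (\<lambda>y y'. 1) g = (\<integral>p. (1 - sgn (snd (fst p) - snd (snd p)) * sgn (g (fst (fst p)) - g (fst (snd p)))) / 2 \<partial>?Q)"
      unfolding rank_loss_def by (rule integral_cong_AE) (use ae in auto)
    also have "\<dots> = (1 - kendall_tau P g) / 2"
      using it by (simp add: kendall_tau_def prob_space diff_divide_distrib)
    finally show ?thesis .
  qed
  have p2: "rank_loss P (\<lambda>y y'. \<bar>y - y'\<bar>) g =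
           (\<integral>p. \<bar>snd (fst p) - snd (snd p)\<bar> \<partial>(P \<Otimes>\<^sub>M P)) / 2
           - 2 * cov_of P snd (\<lambda>z. cdf_of P (\<lambda>u. g (fst u)) (g (fst z)))"
    unfolding rank_loss_def using gini_gen[OF P Gm assms(6) Ym assms(3)] by simp
  have EU: "(\<integral>p. \<bar>FY (snd (fst p)) - FY (snd (snd p))\<bar> \<partial>?Q) = 1/3"
  proof -
    have z: "(\<integral>p. \<bar>FY (snd (fst p)) - FY (snd (snd p))\<bar> * indicator {p. (FY (snd (fst p)) - FY (snd (snd p))) * sgn (snd (fst p) - snd (snd p)) \<le> 0} p \<partial>?Q) = 0"
    proof -
      have "\<bar>FY (snd (fst p)) - FY (snd (snd p))\<bar> * indicator {p. (FY (snd (fst p)) - FY (snd (snd p))) * sgn (snd (fst p) - snd (snd p)) \<le> 0} p = 0" for p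
      proof -
        consider "FY (snd (fst p)) = FY (snd (snd p))" | "FY (snd (fst p)) > FY (snd (snd p))" | "FY (snd (fst p)) < FY (snd (snd p))" by linarith
        then show ?thesis
        proof cases
          case 2
          then have "snd (fst p) > snd (snd p)" using FYmono[of "snd (fst p)" "snd (snd p)"] by linarith
          then show ?thesis using 2 by (auto simp: indicator_def mult_le_0_iff)
        next
          case 3
          then have "snd (fst p) < snd (snd p)" using FYmono[of "snd (snd p)" "snd (fst p)"] by linarith
          then show ?thesis using 3 by (auto simp: indicator_def mult_le_0_iff)
        qed simp
      qed
      then have "(\<integral>p. \<bar>FY (snd (fst p)) - FY (snd (snd p))\<bar> * indicator {p. (FY (snd (fst p)) - FY (snd (snd p))) * sgn (snd (fst p) - snd (snd p)) \<le> 0} p \<partial>?Q) = (\<integral>p. 0 \<partial>?Q)"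
        by (intro Bochner_Integration.integral_cong refl)
      then show ?thesis by simp
    qed
    have g0: "0 = (\<integral>p. \<bar>FY (snd (fst p)) - FY (snd (snd p))\<bar> \<partial>?Q) / 2 - 2 * cov_of P (\<lambda>z. FY (snd z)) (\<lambda>z. FY (snd z))"
      using gini_gen[OF P Ym assms(4) Um iU] z by (simp add: FY_def)
    have "cov_of P (\<lambda>z. FY (snd z)) (\<lambda>z. FY (snd z)) = 1/12"
    proof -
      have m1: "(\<integral>z. cdf_of P snd (snd z) \<partial>P) = 1/2"
        and m2: "(\<integral>z. cdf_of P snd (snd z) * cdf_of P snd (snd z) \<partial>P) = 1/3"
        using cdf_of_moments[OF P Ym assms(4)] by (simp_all add: power2_eq_square)
      show ?thesis unfolding cov_of_def FY_def m1 m2 by simp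
    qed
    then show ?thesis using g0 by simp
  qed
  have p3: "rank_loss P (\<lambda>y y'. \<bar>cdf_of P snd y - cdf_of P snd y'\<bar>) g = (1 - spearman_rho P g) / 6"
  proof -
    have "rank_loss P (\<lambda>y y'. \<bar>cdf_of P snd y - cdf_of P snd y'\<bar>) g =
      (\<integral>p. \<bar>FY (snd (fst p)) - FY (snd (snd p))\<bar> * indicator {p. (FY (snd (fst p)) - FY (snd (snd p))) * sgn (g (fst (fst p)) - g (fst (snd p))) \<le> 0} p \<partial>?Q)"
      unfolding rank_loss_def FY_def[symmetric]
      by (rule Bochner_Integration.integral_cong[OF refl]) (unfold indicator_def of_bool_def mem_Collect_eq, rule mono_sign_ind[OF FYmono])
    also have "\<dots> = (\<integral>p. \<bar>FY (snd (fst p)) - FY (snd (snd p))\<bar> \<partial>?Q) / 2 - 2 * cov_of P (\<lambda>z. FY (snd z)) (\<lambda>z. cdf_of P (\<lambda>u. g (fst u)) (g (fst z)))"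
      using gini_gen[OF P Gm assms(6) Um iU] by simp
    also have "\<dots> = (1 - spearman_rho P g) / 6"
      unfolding EU by (simp add: spearman_rho_def FY_def)
    finally show ?thesis .
  qed
  show ?thesis using p1 p2 p3 by blast
qed

end
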